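(* For $T\in D(\nu)$, let $S_T$ be the set of all $\lambda_1\in\mathcal P$ such that $T\in\underline{\mathrm{CLR}}^{\lambda(\lambda_1)}_{\alpha(\lambda_1),\nu}$. Then $S_T=\lambda_{\min}(T)+\mathcal P=\{\lambda_{\min}(T)+\delta:\delta\in\mathcal P\}$.
   Context: Identify a partition $\lambda=(a_1\ge a_2\ge\cdots)$ with $\sum_ja_j\epsilon_j$ in $\Lambda=\bigoplus_{j\ge1}\mathbb Z\epsilon_j$; put $\omega_i=\epsilon_1+\dots+\epsilon_i$; partitions are exactly elements with all $\omega$-coordinates $\ge0$, and addition of partitions is addition in $\Lambda$. For $x,y\in\Lambda$, $y\le x$ means $x-y$ has all $\omega$-coordinates $\ge0$. $\mathcal P$ = partitions, $\mathcal P^k$ = $k$-tuples. $SST(\nu)$ = semistandard tableaux of shape $\nu$ with entries in $\mathbb Z_{>0}$, with the standard $\mathfrak{gl}_\infty$-crystal structure. For $T\in SST(\nu)$: $\mathrm{wt}(T)=\sum_j(\#\text{entries }j)\epsilon_j$, $\varepsilon_i(T)=\max\{m\ge0:\tilde e_i^mT\ne0\}$, $\varepsilon(T)=\sum_i\varepsilon_i(T)\omega_i$. $\mathrm{CLR}^\lambda_{\alpha,\nu}=\{T\in SST(\nu):\varepsilon(T)\le\alpha,\ \alpha+\mathrm{wt}(T)=\lambda\}$. Fix $k\ge1$, partitions $\nu=(\nu_1^+,\nu_1^-,\dots,\nu_k^+,\nu_k^-)$; indices cyclic mod $k$ ($\lambda_0:=\lambda_k$). $\underline{SST}(\nu)=\prod_iSST(\nu_i^+)\times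 SST(\nu_i^-)$, $T=(T_1^+,T_1^-,\dots,T_k^+,T_k^-)$, $\mathrm{wt}(T_i)=\mathrm{wt}(T_i^+)-\mathrm{wt}(T_i^-)$. $\underline{\mathrm{CLR}}^\lambda_{\alpha,\nu}=\prod_{i=1}^k\mathrm{CLR}^{\lambda_i}_{\alpha_i,\nu_i^+}\times\mathrm{CLR}^{\lambda_{i-1}}_{\alpha_i,\nu_i^-}$. $D(\nu)$ = set of $T$ lying in some $\underline{\mathrm{CLR}}^\lambda_{\alpha,\nu}$ with $\lambda,\alpha\in\mathcal P^k$. For $\lambda_1\in\mathcal P$: $\lambda(\lambda_1)=(\lambda_i)_i$ with $\lambda_i=\lambda_1+\sum_{j=2}^i\mathrm{wt}(T_j)$, $\alpha(\lambda_1)=(\alpha_i)_i$ with $\alpha_i=\lambda_1-\mathrm{wt}(T_i^+)+\sum_{j=2}^i\mathrm{wt}(T_j)$. $\lambda_{\min}(T)$ is the coordinatewise (in $\omega$-coordinates) maximum of $S_i^\pm=\varepsilon(T_i^\pm)+\mathrm{wt}(T_i^+)-\sum_{j=2}^i\mathrm{wt}(T_j)$, $i=1,\dots,k$; it is a partition. *)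

theory Defs
  imports Main
begin

text \<open>Elements of Lambda = direct sum of Z eps_j (j >= 1) are finitely supported
  functions nat => int; the value at index k is the coefficient of eps_(k+1)
  (0-based indexing).  Likewise the omega-coordinate at index k is the
  coefficient of omega_(k+1).\<close>

type_synonym lam = "nat \<Rightarrow> int"

definition finsupp :: "lam \<Rightarrow> bool" where
  "finsupp x \<longleftrightarrow> finite {j. x j \<noteq> 0}"

text \<open>omega-coordinate: x = sum_i c_i omega_i with c_i = a_i - a_(i+1).\<close>
definition omc :: "lam \<Rightarrow> nat \<Rightarrow> int" where
  "omc x i = x i - x (Suc i)"

definition from_omc :: "(nat \<Rightarrow> int) \<Rightarrow> lam" where
  "from_omc c j = (\<Sum>i\<in>{i. j \<le> i \<and> c i \<noteq> 0}. c i)"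

definition is_partition :: "lam \<Rightarrow> bool" where
  "is_partition x \<longleftrightarrow> finsupp x \<and> (\<forall>i. 0 \<le> omc x i)"

definition partitions :: "lam set" where
  "partitions = {x. is_partition x}"

definition lam_le :: "lam \<Rightarrow> lam \<Rightarrow> bool" where
  "lam_le y x \<longleftrightarrow> (\<forall>i. omc y i \<le> omc x i)"

text \<open>A tableau of shape nu: a map from cells (row, column), both 0-based, to
  entries; cells are (r,c) with c < nu_r; entries are positive integers in the
  cells and 0 outside.\<close>

type_synonym tab = "nat \<times> nat \<Rightarrow> nat"

definition in_shape :: "lam \<Rightarrow> nat \<times> nat \<Rightarrow> bool" where
  "in_shape nu p \<longleftrightarrow> int (snd p) < nu (fst p)"

definition SST :: "lam \<Rightarrow> tab set" where
  "SST nu = {T. (\<forall>p. in_shape nu p \<longrightarrow> 0 < T p)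
      \<and> (\<forall>p. \<not> in_shape nu p \<longrightarrow> T p = 0)
      \<and> (\<forall>r c c'. in_shape nu (r, c') \<longrightarrow> c < c' \<longrightarrow> T (r, c) \<le> T (r, c'))
      \<and> (\<forall>r r' c. in_shape nu (r', c) \<longrightarrow> r < r' \<longrightarrow> T (r, c) < T (r', c))}"

text \<open>wt(T) = sum_j (number of entries j) eps_j; index k stands for entry k+1.\<close>
definition wt :: "tab \<Rightarrow> lam" where
  "wt T k = int (card {p. T p = Suc k})"

definition nrows :: "lam \<Rightarrow> nat" where
  "nrows nu = (LEAST n. \<forall>r\<ge>n. nu r \<le> 0)"

definition read_cells :: "lam \<Rightarrow> (nat \<times> nat) list" where
  "read_cells nu = concat (map (\<lambda>r. map (\<lambda>c. (r, c)) [0..<nat (nu r)]) (rev [0..<nrows nu]))"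

text \<open>Signature rule: scanning the reading word left to right, each letter i+1
  is pushed on a stack and each letter i cancels the most recent uncancelled
  letter i+1.  The result is the stack of unmatched letters i+1 (most recent
  first).\<close>
primrec unm :: "nat \<Rightarrow> tab \<Rightarrow> (nat \<times> nat) list \<Rightarrow> (nat \<times> nat) list \<Rightarrow> (nat \<times> nat) list" where
  "unm i T [] st = st"
| "unm i T (p # ps) st =
     (if T p = Suc i then unm i T ps (p # st)
      else if T p = i then unm i T ps (drop 1 st)
      else unm i T ps st)"

text \<open>Kashiwara operator e_i (i >= 1): change the leftmost unmatched i+1 into i;
  None represents 0.\<close>
definition e_op :: "lam \<Rightarrow> nat \<Rightarrow> tab \<Rightarrow> tab option" where
  "e_op nu i T = (let st = unm i T (read_cells nu) [] in
     if st = [] then None else Some (T(last st := i)))"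

fun e_pow :: "lam \<Rightarrow> nat \<Rightarrow> nat \<Rightarrow> tab \<Rightarrow> tab option" where
  "e_pow nu i 0 T = Some T"
| "e_pow nu i (Suc m) T = Option.bind (e_pow nu i m T) (e_op nu i)"

definition eps_i :: "lam \<Rightarrow> nat \<Rightarrow> tab \<Rightarrow> nat" where
  "eps_i nu i T = (GREATEST m. e_pow nu i m T \<noteq> None)"

text \<open>epsilon(T) = sum_(i>=1) epsilon_i(T) omega_i; omega-index k stands for omega_(k+1).\<close>
definition eps_vec :: "lam \<Rightarrow> tab \<Rightarrow> lam" where
  "eps_vec nu T = from_omc (\<lambda>k. int (eps_i nu (Suc k) T))"

definition CLR :: "lam \<Rightarrow> lam \<Rightarrow> lam \<Rightarrow> tab set" where
  "CLR lambda alpha nu = {T \<in> SST nu. lam_le (eps_vec nu T) alpha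
       \<and> (\<lambda>j. alpha j + wt T j) = lambda}"

definition prv :: "nat \<Rightarrow> nat \<Rightarrow> nat" where
  "prv k i = (if i = 1 then k else i - 1)"

definition in_CLR_tuple :: "nat \<Rightarrow> (nat \<Rightarrow> lam) \<Rightarrow> (nat \<Rightarrow> lam)
    \<Rightarrow> (nat \<Rightarrow> lam) \<Rightarrow> (nat \<Rightarrow> lam) \<Rightarrow> (nat \<Rightarrow> tab) \<Rightarrow> (nat \<Rightarrow> tab) \<Rightarrow> bool" where
  "in_CLR_tuple k lambda alpha nup num Tp Tm \<longleftrightarrow>
     (\<forall>i\<in>{1..k}. Tp i \<in> CLR (lambda i) (alpha i) (nup i)
               \<and> Tm i \<in> CLR (lambda (prv k i)) (alpha i) (num i))"

definition in_D :: "nat \<Rightarrow> (nat \<Rightarrow> lam) \<Rightarrow> (nat \<Rightarrow> lam) \<Rightarrow> (nat \<Rightarrow> tab) \<Rightarrow> (nat \<Rightarrow> tab) \<Rightarrow> bool" where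
  "in_D k nup num Tp Tm \<longleftrightarrow>
     (\<exists>lambda alpha. (\<forall>i\<in>{1..k}. is_partition (lambda i) \<and> is_partition (alpha i))
        \<and> in_CLR_tuple k lambda alpha nup num Tp Tm)"

definition wtT :: "(nat \<Rightarrow> tab) \<Rightarrow> (nat \<Rightarrow> tab) \<Rightarrow> nat \<Rightarrow> lam" where
  "wtT Tp Tm i = (\<lambda>j. wt (Tp i) j - wt (Tm i) j)"

definition wtsum :: "(nat \<Rightarrow> tab) \<Rightarrow> (nat \<Rightarrow> tab) \<Rightarrow> nat \<Rightarrow> lam" where
  "wtsum Tp Tm i = (\<lambda>j. \<Sum>l\<in>{2..i}. wtT Tp Tm l j)"

definition lam_of :: "(nat \<Rightarrow> tab) \<Rightarrow> (nat \<Rightarrow> tab) \<Rightarrow> lam \<Rightarrow> nat \<Rightarrow> lam" where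
  "lam_of Tp Tm l1 i = (\<lambda>j. l1 j + wtsum Tp Tm i j)"

definition alpha_of :: "(nat \<Rightarrow> tab) \<Rightarrow> (nat \<Rightarrow> tab) \<Rightarrow> lam \<Rightarrow> nat \<Rightarrow> lam" where
  "alpha_of Tp Tm l1 i = (\<lambda>j. l1 j - wt (Tp i) j + wtsum Tp Tm i j)"

definition S_set :: "nat \<Rightarrow> (nat \<Rightarrow> lam) \<Rightarrow> (nat \<Rightarrow> lam) \<Rightarrow> (nat \<Rightarrow> tab) \<Rightarrow> (nat \<Rightarrow> tab) \<Rightarrow> lam set" where
  "S_set k nup num Tp Tm = {l1 \<in> partitions.
     in_CLR_tuple k (lam_of Tp Tm l1) (alpha_of Tp Tm l1) nup num Tp Tm}"

definition S_plus :: "(nat \<Rightarrow> lam) \<Rightarrow> (nat \<Rightarrow> tab) \<Rightarrow> (nat \<Rightarrow> tab) \<Rightarrow> nat \<Rightarrow> lam" where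
  "S_plus nup Tp Tm i = (\<lambda>j. eps_vec (nup i) (Tp i) j + wt (Tp i) j - wtsum Tp Tm i j)"

definition S_minus :: "(nat \<Rightarrow> lam) \<Rightarrow> (nat \<Rightarrow> tab) \<Rightarrow> (nat \<Rightarrow> tab) \<Rightarrow> nat \<Rightarrow> lam" where
  "S_minus num Tp Tm i = (\<lambda>j. eps_vec (num i) (Tm i) j + wt (Tp i) j - wtsum Tp Tm i j)"

definition lam_min :: "nat \<Rightarrow> (nat \<Rightarrow> lam) \<Rightarrow> (nat \<Rightarrow> lam) \<Rightarrow> (nat \<Rightarrow> tab) \<Rightarrow> (nat \<Rightarrow> tab) \<Rightarrow> lam" where
  "lam_min k nup num Tp Tm = from_omc (\<lambda>c.
     Max ((\<lambda>i. omc (S_plus nup Tp Tm i) c) ` {1..k} \<union> (\<lambda>i. omc (S_minus num Tp Tm i) c) ` {1..k}))"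

end

theory Submission
  imports Defs
begin


lemma unm_append: "unm i T (xs @ ys) st = unm i T ys (unm i T xs st)"
  by (induction xs arbitrary: st) auto

lemma unm_set: "set (unm i T ps st) \<subseteq> {p\<in>set ps. T p = Suc i} \<union> set st"
proof (induction ps arbitrary: st)
  case Nil then show ?case by simp
next
  case (Cons p ps)
  show ?case using Cons.IH[of "p # st"] Cons.IH[of "drop 1 st"] Cons.IH[of st]
    set_drop_subset[of 1 st] by auto
qed

lemma unm_cong: "\<forall>p\<in>set ps. T p = T' p \<Longrightarrow> unm i T ps st = unm i T' ps st"
  by (induction ps arbitrary: st) auto

lemma unm_split: "\<exists>n. \<forall>st. unm i T ps st = unm i T ps [] @ drop n st"
proof (induction ps)
  case Nil then show ?case by (auto intro: exI[of _ 0])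
next
  case (Cons p ps)
  then obtain n where n: "\<And>st. unm i T ps st = unm i T ps [] @ drop n st" by blast
  show ?case
  proof (cases "T p = Suc i")
    case True
    show ?thesis
    proof (cases n)
      case 0
      have "\<forall>st. unm i T (p # ps) st = unm i T (p # ps) [] @ drop 0 st"
      proof
        fix st show "unm i T (p # ps) st = unm i T (p # ps) [] @ drop 0 st"
          using True n[of "p # st"] n[of "[p]"] 0 by simp
      qed
      then show ?thesis by blast
    next
      case (Suc m)
      have "\<forall>st. unm i T (p # ps) st = unm i T (p # ps) [] @ drop m st"
      proof
        fix st show "unm i T (p # ps) st = unm i T (p # ps) [] @ drop m st"
          using True n[of "p # st"] n[of "[p]"] Suc by simp
      qed
      then show ?thesis by blast
    qed
  next
    case False
    show ?thesis
    proof (cases "T p = i")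
      case True
      have "\<forall>st. unm i T (p # ps) st = unm i T (p # ps) [] @ drop (Suc n) st"
      proof
        fix st show "unm i T (p # ps) st = unm i T (p # ps) [] @ drop (Suc n) st"
          using True False n[of "drop 1 st"] n[of "[]"] by (simp add: drop_Suc)
      qed
      then show ?thesis by blast
    next
      case F2: False
      have "\<forall>st. unm i T (p # ps) st = unm i T (p # ps) [] @ drop n st"
      proof
        fix st show "unm i T (p # ps) st = unm i T (p # ps) [] @ drop n st"
          using F2 False n[of st] by simp
      qed
      then show ?thesis by blast
    qed
  qed
qed

lemma unm_count: "int (length (unm i T ps st)) \<ge> int (length st)
   + int (length (filter (\<lambda>p. T p = Suc i) ps)) - int (length (filter (\<lambda>p. T p = i) ps))"
proof (induction ps arbitrary: st)
  case Nil then show ?case by simp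
next
  case (Cons p ps)
  show ?case using Cons.IH[of "p # st"] Cons.IH[of "drop 1 st"] Cons.IH[of st] by auto
qed

definition LL :: "lam \<Rightarrow> nat \<Rightarrow> tab \<Rightarrow> nat" where
  "LL nu i T = length (unm i T (read_cells nu) [])"

lemma distinct_rows: "distinct rs \<Longrightarrow>
  distinct (concat (map (\<lambda>r. map (\<lambda>c. (r, c)) (g r)) rs)) \<longleftrightarrow> (\<forall>r\<in>set rs. distinct (g r))"
proof (induction rs)
  case Nil then show ?case by simp
next
  case (Cons r rs)
  then show ?case by (auto simp: distinct_map inj_on_def)
qed

lemma read_distinct: "distinct (read_cells nu)"
  unfolding read_cells_def by (subst distinct_rows) auto

lemma e_op_step:
  assumes "e_op nu i T = Some T'"
  shows "LL nu i T \<ge> 1 \<and> LL nu i T' = LL nu i T - 1"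
proof -
  define w where "w = read_cells nu"
  define st where "st = unm i T w []"
  have ne: "st \<noteq> []" and T': "T' = T(last st := i)"
    using assms unfolding e_op_def st_def w_def Let_def by (auto split: if_splits)
  define q where "q = last st"
  have "q \<in> set st" using ne q_def by simp
  then have qw: "q \<in> set w" and Tq: "T q = Suc i" using unm_set[of i T w "[]"] st_def by auto
  obtain pre post where wsp: "w = pre @ q # post" using split_list[OF qw] by blast
  have dw: "distinct w" using read_distinct w_def by simp
  then have qpre: "q \<notin> set pre" and qpost: "q \<notin> set post" using wsp by auto
  define s0 where "s0 = unm i T pre []"
  have s0pre: "set s0 \<subseteq> set pre" using unm_set[of i T pre "[]"] s0_def by auto
  obtain n where n: "\<And>st. unm i T post st = unm i T post [] @ drop n st"
    using unm_split by blast
  define A where "A = unm i T post []"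
  have Apost: "set A \<subseteq> set post" using unm_set[of i T post "[]"] A_def by auto
  have st_eq: "st = A @ drop n (q # s0)"
    unfolding st_def wsp using n[of "q # s0"] Tq by (simp add: unm_append s0_def A_def)
  have dne: "drop n (q # s0) \<noteq> []"
  proof
    assume "drop n (q # s0) = []"
    then have "st = A" using st_eq by simp
    then have "q \<in> set A" using \<open>q \<in> set st\<close> q_def by simp
    then show False using Apost qpost by auto
  qed
  have "last st = last (drop n (q # s0))" using st_eq dne by simp
  then have "q = last (drop n (q # s0))" using q_def by simp
  also have "\<dots> = last (q # s0)" using dne by (subst last_drop) auto
  finally have lq: "q = last (q # s0)" .
  have s0e: "s0 = []"
  proof (rule ccontr)
    assume "s0 \<noteq> []"
    then have "q = last s0" using lq by simp
    then have "q \<in> set s0" using \<open>s0 \<noteq> []\<close> by simp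
    then show False using s0pre qpre by auto
  qed
  then have n0: "n = 0" using dne by (cases n) auto
  have L1: "LL nu i T = length A + 1" unfolding LL_def
    using st_eq s0e n0 st_def w_def by simp
  have "unm i T' w [] = unm i T' post (drop 1 (unm i T' pre []))"
    unfolding wsp using T' q_def by (simp add: unm_append)
  also have "unm i T' pre [] = s0" unfolding s0_def
    by (rule unm_cong[symmetric]) (use qpre T' q_def in auto)
  also have "unm i T' post (drop 1 s0) = A" unfolding A_def s0e drop_Nil
    by (rule unm_cong[symmetric]) (use qpost T' q_def in auto)
  finally have "LL nu i T' = length A" unfolding LL_def w_def by simp
  then show ?thesis using L1 by simp
qed

lemma e_op_none: "e_op nu i T = None \<longleftrightarrow> LL nu i T = 0"
  unfolding e_op_def LL_def Let_def by auto

lemma e_pow_LL: "(m \<le> LL nu i T \<longrightarrow> (\<exists>T'. e_pow nu i m T = Some T' \<and> LL nu i T' = LL nu i T - m))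
   \<and> (m > LL nu i T \<longrightarrow> e_pow nu i m T = None)"
proof (induction m)
  case 0 then show ?case by simp
next
  case (Suc m)
  show ?case
  proof (cases "Suc m \<le> LL nu i T")
    case True
    then obtain T' where T': "e_pow nu i m T = Some T'" "LL nu i T' = LL nu i T - m"
      using Suc by auto
    then have "LL nu i T' \<noteq> 0" using True by simp
    then obtain T'' where T'': "e_op nu i T' = Some T''" using e_op_none by (cases "e_op nu i T'") auto
    show ?thesis using e_op_step[OF T''] T' T'' True by auto
  next
    case False
    show ?thesis
    proof (cases "m > LL nu i T")
      case True then show ?thesis using Suc False by simp
    next
      case F2: False
      then obtain T' where T': "e_pow nu i m T = Some T'" "LL nu i T' = 0"
        using Suc False by auto
      then show ?thesis using False e_op_none by simp
    qed
  qed
qed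

lemma eps_i_LL: "eps_i nu i T = LL nu i T"
  unfolding eps_i_def
proof (rule Greatest_equality)
  show "e_pow nu i (LL nu i T) T \<noteq> None" using e_pow_LL[of "LL nu i T" nu i T] by auto
next
  fix y assume "e_pow nu i y T \<noteq> None"
  then show "y \<le> LL nu i T" using e_pow_LL[of y nu i T] by (cases "y \<le> LL nu i T") auto
qed

lemma LL_zero: "(\<forall>p\<in>set (read_cells nu). T p \<noteq> Suc i) \<Longrightarrow> LL nu i T = 0"
proof -
  assume a: "\<forall>p\<in>set (read_cells nu). T p \<noteq> Suc i"
  have e: "{p\<in>set (read_cells nu). T p = Suc i} = {}" using a by blast
  have "set (unm i T (read_cells nu) []) = {}" using unm_set[of i T "read_cells nu" "[]"] unfolding e by simp
  then show ?thesis unfolding LL_def by simp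
qed

lemma eps_fin: "finite {k. int (eps_i nu (Suc k) T) \<noteq> 0}"
proof -
  have sub: "{k. int (eps_i nu (Suc k) T) \<noteq> 0} \<subseteq> (\<lambda>p. T p - 2) ` set (read_cells nu)"
  proof
    fix k assume "k \<in> {k. int (eps_i nu (Suc k) T) \<noteq> 0}"
    then have "LL nu (Suc k) T \<noteq> 0" by (simp add: eps_i_LL)
    then have "\<not> (\<forall>p\<in>set (read_cells nu). T p \<noteq> Suc (Suc k))" using LL_zero[of nu T "Suc k"] by metis
    then obtain p where p: "p \<in> set (read_cells nu)" "T p = Suc (Suc k)" by metis
    then have "k = T p - 2" by simp
    then show "k \<in> (\<lambda>p. T p - 2) ` set (read_cells nu)" using p(1) by (rule image_eqI)
  qed
  have "finite ((\<lambda>p. T p - 2) ` set (read_cells nu))" by (rule finite_imageI) (rule finite_set)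
  then show ?thesis using sub by (rule finite_subset[rotated])
qed

lemma from_omc_omc: assumes "finite {i. c i \<noteq> 0}" shows "omc (from_omc c) j = c j"
proof -
  have f: "finite {i. Suc j \<le> i \<and> c i \<noteq> 0}" by (rule finite_subset[OF _ assms]) auto
  show ?thesis
  proof (cases "c j = 0")
    case True
    then have "{i. j \<le> i \<and> c i \<noteq> 0} = {i. Suc j \<le> i \<and> c i \<noteq> 0}"
      by (auto simp: le_less Suc_le_eq)
    then show ?thesis using True by (simp add: omc_def from_omc_def)
  next
    case False
    then have "{i. j \<le> i \<and> c i \<noteq> 0} = insert j {i. Suc j \<le> i \<and> c i \<noteq> 0}"
      by (auto simp: le_less Suc_le_eq)
    then show ?thesis using f by (simp add: omc_def from_omc_def)
  qed
qed

lemma from_omc_finsupp: assumes "finite {i. c i \<noteq> 0}" shows "finsupp (from_omc c)"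
  unfolding finsupp_def
proof (rule finite_subset)
  show "{j. from_omc c j \<noteq> 0} \<subseteq> (\<Union>i\<in>{i. c i \<noteq> 0}. {..i})"
  proof
    fix j assume "j \<in> {j. from_omc c j \<noteq> 0}"
    then have "from_omc c j \<noteq> 0" by simp
    then have "{i. j \<le> i \<and> c i \<noteq> 0} \<noteq> {}" unfolding from_omc_def by (metis sum.empty)
    then show "j \<in> (\<Union>i\<in>{i. c i \<noteq> 0}. {..i})" by auto
  qed
qed (use assms in auto)

lemma omc_eps: "omc (eps_vec nu T) k = int (eps_i nu (Suc k) T)"
  unfolding eps_vec_def by (rule from_omc_omc[OF eps_fin])

lemma cells_in_read:
  assumes "T \<in> SST nu" "finsupp nu" "T p \<noteq> 0"
  shows "p \<in> set (read_cells nu)"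
proof -
  obtain r c where p: "p = (r, c)" by (cases p)
  have z: "\<forall>p. \<not> in_shape nu p \<longrightarrow> T p = 0" using assms(1) unfolding SST_def mem_Collect_eq
    by (elim conjE) assumption
  have "in_shape nu p"
  proof (rule ccontr)
    assume "\<not> in_shape nu p"
    then show False using assms(3) z[rule_format, of p] by simp
  qed
  then have sh: "int c < nu r" using p unfolding in_shape_def by simp
  have "finite {j. nu j \<noteq> 0}" using assms(2) by (simp add: finsupp_def)
  define N where "N = Suc (Max {j. nu j \<noteq> 0})"
  have N: "{j. nu j \<noteq> 0} \<subseteq> {..<N}"
  proof
    fix j assume "j \<in> {j. nu j \<noteq> 0}"
    then have "j \<le> Max {j. nu j \<noteq> 0}" using Max_ge \<open>finite {j. nu j \<noteq> 0}\<close> by blast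
    then show "j \<in> {..<N}" unfolding N_def by simp
  qed
  have ex: "\<forall>r\<ge>N. nu r \<le> 0"
  proof (intro allI impI)
    fix r assume "N \<le> r"
    then have "r \<notin> {j. nu j \<noteq> 0}" using N by auto
    then show "nu r \<le> 0" by simp
  qed
  have nr: "\<forall>r\<ge>nrows nu. nu r \<le> 0" unfolding nrows_def by (rule LeastI[of _ N]) (rule ex)
  have "r < nrows nu"
  proof (rule ccontr)
    assume "\<not> r < nrows nu"
    then have "nu r \<le> 0" using nr by simp
    then show False using sh by linarith
  qed
  moreover have "c < nat (nu r)" using sh by linarith
  ultimately have "p \<in> set (map (\<lambda>c. (r, c)) [0..<nat (nu r)])" using p by simp
  moreover have "map (\<lambda>c. (r, c)) [0..<nat (nu r)] \<in> set (map (\<lambda>r. map (\<lambda>c. (r, c)) [0..<nat (nu r)]) (rev [0..<nrows nu]))"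
    using \<open>r < nrows nu\<close> by simp
  ultimately show ?thesis unfolding read_cells_def set_concat by blast
qed

lemma card_filter_read:
  assumes "T \<in> SST nu" "finsupp nu" "v \<noteq> 0"
  shows "card {p. T p = v} = length (filter (\<lambda>p. T p = v) (read_cells nu))"
proof -
  have "{p. T p = v} = set (filter (\<lambda>p. T p = v) (read_cells nu))"
    using cells_in_read[OF assms(1,2)] assms(3) by auto
  then show ?thesis using distinct_card[of "filter (\<lambda>p. T p = v) (read_cells nu)"] read_distinct
    by simp
qed

lemma phi_nonneg:
  assumes "T \<in> SST nu" "finsupp nu"
  shows "0 \<le> omc (eps_vec nu T) k + omc (wt T) k"
proof -
  have "int (LL nu (Suc k) T) \<ge> int (length (filter (\<lambda>p. T p = Suc (Suc k)) (read_cells nu)))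
      - int (length (filter (\<lambda>p. T p = Suc k) (read_cells nu)))"
    unfolding LL_def using unm_count[where i="Suc k" and T=T and ps="read_cells nu" and st="[]"] by simp
  moreover have "omc (eps_vec nu T) k = int (LL nu (Suc k) T)" by (simp only: omc_eps eps_i_LL)
  moreover have "omc (wt T) k = int (card {p. T p = Suc k}) - int (card {p. T p = Suc (Suc k)})"
    by (simp add: omc_def wt_def)
  moreover have "card {p. T p = Suc k} = length (filter (\<lambda>p. T p = Suc k) (read_cells nu))"
    by (rule card_filter_read[OF assms]) simp
  moreover have "card {p. T p = Suc (Suc k)} = length (filter (\<lambda>p. T p = Suc (Suc k)) (read_cells nu))"
    by (rule card_filter_read[OF assms]) simp
  ultimately show ?thesis by linarith
qed



lemma finsupp_add: "finsupp f \<Longrightarrow> finsupp g \<Longrightarrow> finsupp (\<lambda>j. f j + g j)"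
  unfolding finsupp_def by (rule finite_subset[of _ "{j. f j \<noteq> 0} \<union> {j. g j \<noteq> 0}"]) auto

lemma finsupp_diff: "finsupp f \<Longrightarrow> finsupp g \<Longrightarrow> finsupp (\<lambda>j. f j - g j)"
  unfolding finsupp_def by (rule finite_subset[of _ "{j. f j \<noteq> 0} \<union> {j. g j \<noteq> 0}"]) auto

lemma finsupp_omc: "finsupp f \<Longrightarrow> finite {c. omc f c \<noteq> 0}"
proof -
  assume "finsupp f"
  then have F: "finite {j. f j \<noteq> 0}" by (simp add: finsupp_def)
  have "finite (Suc -` {j. f j \<noteq> 0})" by (rule finite_vimageI[OF F]) simp
  then show ?thesis
    by (rule finite_subset[rotated, OF finite_UnI[OF F]]) (auto simp: omc_def)
qed

lemma wtsum_one: "wtsum Tp Tm (Suc 0) j = 0"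
  by (simp add: wtsum_def)

lemma wtsum_step: "2 \<le> i \<Longrightarrow> wtsum Tp Tm i j = wtsum Tp Tm (i - 1) j + wtT Tp Tm i j"
proof -
  assume "2 \<le> i"
  then have "{2..i} = insert i {2..i-1}" by auto
  moreover have "i \<notin> {2..i-1}" using \<open>2 \<le> i\<close> by simp
  ultimately show ?thesis unfolding wtsum_def by (simp add: add.commute)
qed

lemma char:
  assumes k: "1 \<le> k"
    and sst: "\<forall>i\<in>{1..k}. Tp i \<in> SST (nup i) \<and> Tm i \<in> SST (num i)"
    and cyc: "\<forall>j. wt (Tm 1) j - wt (Tp 1) j = wtsum Tp Tm k j"
  shows "in_CLR_tuple k (lam_of Tp Tm l1) (alpha_of Tp Tm l1) nup num Tp Tm \<longleftrightarrow>
    (\<forall>i\<in>{1..k}. \<forall>c. omc (S_plus nup Tp Tm i) c \<le> omc l1 c \<and> omc (S_minus num Tp Tm i) c \<le> omc l1 c)"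
proof -
  have e1: "(\<lambda>j. alpha_of Tp Tm l1 i j + wt (Tp i) j) = lam_of Tp Tm l1 i" for i
    by (rule ext) (simp add: alpha_of_def lam_of_def)
  have e2: "(\<lambda>j. alpha_of Tp Tm l1 i j + wt (Tm i) j) = lam_of Tp Tm l1 (prv k i)" if "i \<in> {1..k}" for i
  proof (rule ext)
    fix j
    show "alpha_of Tp Tm l1 i j + wt (Tm i) j = lam_of Tp Tm l1 (prv k i) j"
    proof (cases "i = 1")
      case True
      then show ?thesis using cyc[rule_format, of j]
        by (simp add: alpha_of_def lam_of_def prv_def wtsum_one)
    next
      case False
      then have "2 \<le> i" using that by auto
      then show ?thesis using False wtsum_step[of i Tp Tm j]
        by (simp add: alpha_of_def lam_of_def prv_def wtT_def)
    qed
  qed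
  have o1: "omc (eps_vec (nup i) (Tp i)) c \<le> omc (alpha_of Tp Tm l1 i) c \<longleftrightarrow>
      omc (S_plus nup Tp Tm i) c \<le> omc l1 c" for i c
    unfolding omc_def alpha_of_def S_plus_def by arith
  have o2: "omc (eps_vec (num i) (Tm i)) c \<le> omc (alpha_of Tp Tm l1 i) c \<longleftrightarrow>
      omc (S_minus num Tp Tm i) c \<le> omc l1 c" for i c
    unfolding omc_def alpha_of_def S_minus_def by arith
  show ?thesis
    unfolding in_CLR_tuple_def CLR_def lam_le_def
    using sst e1 e2 o1 o2 by auto
qed

theorem mainTheorem10:
  fixes k :: nat and nup num :: "nat \<Rightarrow> lam" and Tp Tm :: "nat \<Rightarrow> tab"
  assumes "1 \<le> k"
    and "\<forall>i\<in>{1..k}. is_partition (nup i) \<and> is_partition (num i)"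
    and "in_D k nup num Tp Tm"
  shows "S_set k nup num Tp Tm
           = {(\<lambda>j. lam_min k nup num Tp Tm j + \<delta> j) | \<delta>. \<delta> \<in> partitions}"
proof -
  obtain lambda alpha where part: "\<forall>i\<in>{1..k}. is_partition (lambda i) \<and> is_partition (alpha i)"
    and tup: "in_CLR_tuple k lambda alpha nup num Tp Tm"
    using assms(3) unfolding in_D_def by blast
  have sst: "\<forall>i\<in>{1..k}. Tp i \<in> SST (nup i) \<and> Tm i \<in> SST (num i)"
    using tup unfolding in_CLR_tuple_def CLR_def by auto
  have eqp: "alpha i j + wt (Tp i) j = lambda i j" if "i \<in> {1..k}" for i j
  proof -
    have "(\<lambda>j. alpha i j + wt (Tp i) j) = lambda i"
      using tup that unfolding in_CLR_tuple_def CLR_def by auto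
    then show ?thesis by (metis)
  qed
  have eqm: "alpha i j + wt (Tm i) j = lambda (prv k i) j" if "i \<in> {1..k}" for i j
  proof -
    have "(\<lambda>j. alpha i j + wt (Tm i) j) = lambda (prv k i)"
      using tup that unfolding in_CLR_tuple_def CLR_def by auto
    then show ?thesis by (metis)
  qed
  have lamf: "1 \<le> i \<longrightarrow> i \<le> k \<longrightarrow> lambda i j = lambda 1 j + wtsum Tp Tm i j" for i j
  proof (induction i)
    case 0 then show ?case by simp
  next
    case (Suc i)
    show ?case
    proof (cases "i = 0")
      case True then show ?thesis by (simp add: wtsum_one)
    next
      case False
      show ?thesis
      proof (intro impI)
        assume "1 \<le> Suc i" "Suc i \<le> k"
        then have a: "Suc i \<in> {1..k}" and b: "2 \<le> Suc i" using False by auto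
        have "prv k (Suc i) = i" using False by (simp add: prv_def)
        then show "lambda (Suc i) j = lambda 1 j + wtsum Tp Tm (Suc i) j"
          using eqp[OF a, of j] eqm[OF a, of j] Suc wtsum_step[OF b, of Tp Tm j] False \<open>Suc i \<le> k\<close>
          by (simp add: wtT_def)
      qed
    qed
  qed
  have k1: "1 \<in> {1..k}" using assms(1) by simp
  have cyc: "\<forall>j. wt (Tm 1) j - wt (Tp 1) j = wtsum Tp Tm k j"
  proof
    fix j
    show "wt (Tm 1) j - wt (Tp 1) j = wtsum Tp Tm k j"
      using eqp[OF k1, of j] eqm[OF k1, of j] lamf[of k j] assms(1) by (simp add: prv_def)
  qed
  note ch = char[OF assms(1) sst cyc]
  define l0 where "l0 = lambda 1"
  have tup0: "in_CLR_tuple k (lam_of Tp Tm l0) (alpha_of Tp Tm l0) nup num Tp Tm"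
  proof -
    have L: "lam_of Tp Tm l0 i = lambda i" if "i \<in> {1..k}" for i
      using lamf[of i] that by (auto simp: lam_of_def l0_def)
    have A: "alpha_of Tp Tm l0 i = alpha i" if "i \<in> {1..k}" for i
      using lamf[of i] that eqp[OF that] by (auto simp: alpha_of_def l0_def algebra_simps)
    have P: "prv k i \<in> {1..k}" if "i \<in> {1..k}" for i
      using that by (auto simp: prv_def)
    show ?thesis using tup L A P unfolding in_CLR_tuple_def by auto
  qed
  define M where "M c = Max ((\<lambda>i. omc (S_plus nup Tp Tm i) c) ` {1..k}
       \<union> (\<lambda>i. omc (S_minus num Tp Tm i) c) ` {1..k})" for c
  have fin: "finite ((\<lambda>i. omc (S_plus nup Tp Tm i) c) ` {1..k}
       \<union> (\<lambda>i. omc (S_minus num Tp Tm i) c) ` {1..k})" for c by simp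
  have nemp: "((\<lambda>i. omc (S_plus nup Tp Tm i) c) ` {1..k}
       \<union> (\<lambda>i. omc (S_minus num Tp Tm i) c) ` {1..k}) \<noteq> {}" for c using k1 by blast
  have Mle: "M c \<le> x \<longleftrightarrow> (\<forall>i\<in>{1..k}. omc (S_plus nup Tp Tm i) c \<le> x \<and> omc (S_minus num Tp Tm i) c \<le> x)" for c x
    unfolding M_def using Max_le_iff[OF fin nemp] by auto
  have chM: "in_CLR_tuple k (lam_of Tp Tm l1) (alpha_of Tp Tm l1) nup num Tp Tm \<longleftrightarrow> (\<forall>c. M c \<le> omc l1 c)" for l1
    using ch Mle by blast
  have M0: "0 \<le> M c" for c
  proof -
    have "omc (S_plus nup Tp Tm 1) c \<le> M c" unfolding M_def by (rule Max_ge[OF fin]) (use k1 in blast)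
    moreover have "omc (S_plus nup Tp Tm 1) c = omc (eps_vec (nup 1) (Tp 1)) c + omc (wt (Tp 1)) c"
      by (simp add: omc_def S_plus_def wtsum_one)
    moreover have "0 \<le> omc (eps_vec (nup 1) (Tp 1)) c + omc (wt (Tp 1)) c"
      using phi_nonneg[of "Tp 1" "nup 1" c] sst k1 assms(2) by (auto simp: is_partition_def)
    ultimately show ?thesis by linarith
  qed
  have Ml0: "M c \<le> omc l0 c" for c using chM tup0 by blast
  have l0p: "is_partition l0" using part k1 l0_def by auto
  have Mfin: "finite {c. M c \<noteq> 0}"
  proof (rule finite_subset[OF _ finsupp_omc[of l0]])
    show "{c. M c \<noteq> 0} \<subseteq> {c. omc l0 c \<noteq> 0}"
    proof
      fix c assume "c \<in> {c. M c \<noteq> 0}"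
      then show "c \<in> {c. omc l0 c \<noteq> 0}" using M0[of c] Ml0[of c] by simp
    qed
  qed (use l0p is_partition_def in auto)
  have lm: "lam_min k nup num Tp Tm = from_omc M" unfolding lam_min_def M_def by simp
  have omcl: "omc (lam_min k nup num Tp Tm) c = M c" for c using lm from_omc_omc[OF Mfin] by simp
  have fsl: "finsupp (lam_min k nup num Tp Tm)" using lm from_omc_finsupp[OF Mfin] by simp
  have SS: "S_set k nup num Tp Tm = {l1. is_partition l1 \<and> (\<forall>c. M c \<le> omc l1 c)}"
    unfolding S_set_def partitions_def using chM by auto
  show ?thesis
    unfolding SS
  proof (intro set_eqI iffI)
    fix l1 assume "l1 \<in> {l1. is_partition l1 \<and> (\<forall>c. M c \<le> omc l1 c)}"
    then have l1: "is_partition l1" "\<forall>c. M c \<le> omc l1 c" by auto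
    define \<delta> where "\<delta> = (\<lambda>j. l1 j - lam_min k nup num Tp Tm j)"
    have "\<delta> \<in> partitions" unfolding partitions_def is_partition_def
      using finsupp_diff[of l1 "lam_min k nup num Tp Tm"] l1 fsl omcl
      by (auto simp: \<delta>_def is_partition_def omc_def) (smt (verit) omc_def)
    moreover have "l1 = (\<lambda>j. lam_min k nup num Tp Tm j + \<delta> j)" by (simp add: \<delta>_def)
    ultimately show "l1 \<in> {(\<lambda>j. lam_min k nup num Tp Tm j + \<delta> j) | \<delta>. \<delta> \<in> partitions}" by blast
  next
    fix l1 assume "l1 \<in> {(\<lambda>j. lam_min k nup num Tp Tm j + \<delta> j) | \<delta>. \<delta> \<in> partitions}"
    then obtain \<delta> where d: "is_partition \<delta>" and l1: "l1 = (\<lambda>j. lam_min k nup num Tp Tm j + \<delta> j)"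
      by (auto simp: partitions_def)
    have o: "omc l1 c = M c + omc \<delta> c" for c using omcl[of c] by (simp add: l1 omc_def)
    have "is_partition l1" unfolding is_partition_def
      using finsupp_add[OF fsl, of \<delta>] d o M0 by (auto simp: is_partition_def l1 intro: add_nonneg_nonneg)
    moreover have "\<forall>c. M c \<le> omc l1 c" using o d by (simp add: is_partition_def)
    ultimately show "l1 \<in> {l1. is_partition l1 \<and> (\<forall>c. M c \<le> omc l1 c)}" by blast
  qed
qed

end
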